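(* Let $c_1\ge\dots\ge c_{m+1}\ge0$ and $d_1\ge\dots\ge d_m\ge0$ be integers, let $(r_1,r_2,\dots)$ and $(s_1,s_2,\dots)$ be the conjugate partitions of $(c_1,\dots,c_{m+1})$ and $(d_1,\dots,d_m)$, $r_0=m+1=s_0+1$, $\mathbf r=(r_0,r_1,\dots)$, $\mathbf s=(s_0,s_1,\dots)$. Then $\mathtt c=(c_1,\dots,c_{m+1})\prec'\mathtt d=(d_1,\dots,d_m)$ if and only if $\mathbf s\angle\mathbf r$.
   Context: Conjugate of $(a_1,\dots,a_n)$ (nonincreasing, nonnegative): $(\bar a_1,\bar a_2,\dots)$, $\bar a_k=\#\{i:a_i\ge k\}$. 1step-majorization: for integer chains $\mathtt d=(d_1,\dots,d_m)$ and $\mathtt c=(c_1,\dots,c_{m+1})$ (nonincreasing), $\mathtt c\prec'\mathtt d$ means $d_i=c_{i+1}$ for all $h\le i\le m$, where $h=\min\{i: d_i<c_i\}$ with $d_{m+1}=-\infty$. Conjugate majorization: for nonincreasing nonnegative sequences $\mathbf r=(r_0,r_1,\dots)$, $\mathbf s=(s_0,s_1,\dots)$, $\mathbf s\angle\mathbf r$ means $r_0=s_0+1$ and $r_i=s_i+1$ for $0\le i\le g$, where $g=\max\{i: r_i>s_i\}$. *)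

theory Defs
  imports Main
begin

text \<open>Finite sequences a_1,...,a_n are functions nat => int, only values at indices 1..n matter.\<close>

definition nonincr_on :: "nat \<Rightarrow> (nat \<Rightarrow> int) \<Rightarrow> bool" where
  "nonincr_on n a \<longleftrightarrow> (\<forall>i j. 1 \<le> i \<and> i \<le> j \<and> j \<le> n \<longrightarrow> a j \<le> a i)"

definition conj_part :: "nat \<Rightarrow> (nat \<Rightarrow> int) \<Rightarrow> nat \<Rightarrow> nat" where
  "conj_part n a k = card {i \<in> {1..n}. a i \<ge> int k}"

definition conj_seq :: "nat \<Rightarrow> (nat \<Rightarrow> int) \<Rightarrow> nat \<Rightarrow> nat" where
  "conj_seq n a k = (if k = 0 then n else conj_part n a k)"

text \<open>1step-majorization c \<prec>' d for c = (c_1..c_{m+1}), d = (d_1..d_m), with d_{m+1} = -infinity: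
  h = min {i. d_i < c_i}; the convention d_{m+1} = -infinity makes index m+1 always qualify.\<close>
definition one_step_maj :: "nat \<Rightarrow> (nat \<Rightarrow> int) \<Rightarrow> (nat \<Rightarrow> int) \<Rightarrow> bool" where
  "one_step_maj m c d \<longleftrightarrow>
     (let h = (LEAST i. 1 \<le> i \<and> i \<le> m + 1 \<and> (i = m + 1 \<or> d i < c i))
      in \<forall>i. h \<le> i \<and> i \<le> m \<longrightarrow> d i = c (i + 1))"

definition conj_maj :: "(nat \<Rightarrow> nat) \<Rightarrow> (nat \<Rightarrow> nat) \<Rightarrow> bool" where
  "conj_maj s r \<longleftrightarrow>
     (let g = (GREATEST i. r i > s i)
      in r 0 = s 0 + 1 \<and> (\<forall>i \<le> g. r i = s i + 1))"

end

theory Submission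
  imports Defs
begin

lemma card_ge_iff:
  assumes "nonincr_on n a"
  shows "j \<le> conj_part n a k \<longleftrightarrow> (j = 0 \<or> (j \<le> n \<and> int k \<le> a j))"
proof
  let ?S = "{i \<in> {1..n}. a i \<ge> int k}"
  assume h: "j \<le> conj_part n a k"
  show "j = 0 \<or> (j \<le> n \<and> int k \<le> a j)"
  proof (cases "j = 0")
    case False
    have "card ?S \<le> card {1..n}" by (rule card_mono) auto
    then have jn: "j \<le> n" using h by (simp add: conj_part_def)
    have "int k \<le> a j"
    proof (rule ccontr)
      assume "\<not> int k \<le> a j"
      have "?S \<subseteq> {1..j-1}"
      proof
        fix i assume i: "i \<in> ?S"
        have "i < j"
        proof (rule ccontr)
          assume "\<not> i < j"
          then have "a i \<le> a j" using assms False jn i unfolding nonincr_on_def by auto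
          then show False using i \<open>\<not> int k \<le> a j\<close> by auto
        qed
        then show "i \<in> {1..j-1}" using i by auto
      qed
      then have "card ?S \<le> j - 1" using card_mono[of "{1..j-1}" ?S] by auto
      then show False using h False by (simp add: conj_part_def)
    qed
    then show ?thesis using jn by simp
  qed simp
next
  let ?S = "{i \<in> {1..n}. a i \<ge> int k}"
  assume "j = 0 \<or> (j \<le> n \<and> int k \<le> a j)"
  then show "j \<le> conj_part n a k"
  proof
    assume h: "j \<le> n \<and> int k \<le> a j"
    have "{1..j} \<subseteq> ?S" using h assms unfolding nonincr_on_def
      by auto (meson order_trans)
    then have "card {1..j} \<le> card ?S" by (intro card_mono) auto
    then show ?thesis by (simp add: conj_part_def)
  qed simp
qed


lemma osm_iff:
  "one_step_maj m c d \<longleftrightarrow> (\<exists>h. 1 \<le> h \<and> h \<le> m+1 \<and> (\<forall>i. 1 \<le> i \<and> i < h \<longrightarrow> c i \<le> d i)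
      \<and> (\<forall>i. h \<le> i \<and> i \<le> m \<longrightarrow> d i = c (i+1)))"
proof -
  define h0 where "h0 = (LEAST i. 1 \<le> i \<and> i \<le> m + 1 \<and> (i = m + 1 \<or> d i < c i))"
  have P: "1 \<le> h0 \<and> h0 \<le> m + 1 \<and> (h0 = m + 1 \<or> d h0 < c h0)"
    unfolding h0_def by (rule LeastI[of _ "m+1"]) auto
  have N: "\<And>i. 1 \<le> i \<Longrightarrow> i < h0 \<Longrightarrow> c i \<le> d i"
  proof -
    fix i assume "1 \<le> i" "i < h0"
    have "\<not> (1 \<le> i \<and> i \<le> m + 1 \<and> (i = m + 1 \<or> d i < c i))"
      using \<open>i < h0\<close> unfolding h0_def by (rule not_less_Least)
    then show "c i \<le> d i" using \<open>1 \<le> i\<close> \<open>i < h0\<close> P by auto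
  qed
  have osm: "one_step_maj m c d \<longleftrightarrow> (\<forall>i. h0 \<le> i \<and> i \<le> m \<longrightarrow> d i = c (i + 1))"
    unfolding one_step_maj_def h0_def Let_def by simp
  show ?thesis
  proof
    assume "one_step_maj m c d"
    then show "\<exists>h. 1 \<le> h \<and> h \<le> m+1 \<and> (\<forall>i. 1 \<le> i \<and> i < h \<longrightarrow> c i \<le> d i)
      \<and> (\<forall>i. h \<le> i \<and> i \<le> m \<longrightarrow> d i = c (i+1))"
      using osm P N by (intro exI[of _ h0]) auto
  next
    assume "\<exists>h. 1 \<le> h \<and> h \<le> m+1 \<and> (\<forall>i. 1 \<le> i \<and> i < h \<longrightarrow> c i \<le> d i)
      \<and> (\<forall>i. h \<le> i \<and> i \<le> m \<longrightarrow> d i = c (i+1))"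
    then obtain h where h: "1 \<le> h" "h \<le> m+1" "\<forall>i. 1 \<le> i \<and> i < h \<longrightarrow> c i \<le> d i"
      "\<forall>i. h \<le> i \<and> i \<le> m \<longrightarrow> d i = c (i+1)" by blast
    have "h \<le> h0"
    proof (rule ccontr)
      assume "\<not> h \<le> h0"
      then show False using P h(2) h(3)[rule_format, of h0] by auto
    qed
    then show "one_step_maj m c d" using osm h(4) by auto
  qed
qed

lemma cm_iff:
  fixes r s :: "nat \<Rightarrow> nat"
  assumes "r 0 = s 0 + 1" and B: "\<And>k. s k < r k \<Longrightarrow> k \<le> b"
  shows "conj_maj s r \<longleftrightarrow> (\<exists>g. (\<forall>k. 1 \<le> k \<and> k \<le> g \<longrightarrow> r k = s k + 1) \<and> (\<forall>k>g. r k \<le> s k))"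
proof
  assume "conj_maj s r"
  define g where "g = (GREATEST i. r i > s i)"
  have eq: "\<forall>i\<le>g. r i = s i + 1" using \<open>conj_maj s r\<close> unfolding conj_maj_def g_def Let_def by auto
  have "\<forall>k>g. r k \<le> s k"
  proof (intro allI impI)
    fix k assume "g < k"
    show "r k \<le> s k"
    proof (rule ccontr)
      assume "\<not> r k \<le> s k"
      then have "k \<le> g" unfolding g_def using B by (intro Greatest_le_nat[of _ _ b]) auto
      then show False using \<open>g < k\<close> by simp
    qed
  qed
  then show "\<exists>g. (\<forall>k. 1 \<le> k \<and> k \<le> g \<longrightarrow> r k = s k + 1) \<and> (\<forall>k>g. r k \<le> s k)"
    using eq by blast
next
  assume "\<exists>g. (\<forall>k. 1 \<le> k \<and> k \<le> g \<longrightarrow> r k = s k + 1) \<and> (\<forall>k>g. r k \<le> s k)"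
  then obtain g where g: "\<forall>k. 1 \<le> k \<and> k \<le> g \<longrightarrow> r k = s k + 1" "\<forall>k>g. r k \<le> s k" by blast
  have "(GREATEST i. r i > s i) = g"
  proof (rule Greatest_equality)
    show "s g < r g" using g(1) assms(1) by (cases "g = 0") auto
    fix y assume "s y < r y" then show "y \<le> g" using g(2) by (meson leD le_less_linear)
  qed
  then show "conj_maj s r" unfolding conj_maj_def Let_def using g(1) assms(1)
    by (metis One_nat_def Suc_leI not_gr0 order_refl)
qed


theorem proposition4p5:
  fixes m :: nat and c d :: "nat \<Rightarrow> int"
  assumes "nonincr_on (m + 1) c" and "c (m + 1) \<ge> 0"
    and "nonincr_on m d" and "\<forall>i \<in> {1..m}. d i \<ge> 0"
  shows "one_step_maj m c d \<longleftrightarrow> conj_maj (conj_seq m d) (conj_seq (m + 1) c)"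
proof -
  define r where "r = conj_seq (m + 1) c"
  define s where "s = conj_seq m d"
  have rk: "\<And>k. k \<ge> 1 \<Longrightarrow> r k = conj_part (m+1) c k" unfolding r_def conj_seq_def by simp
  have sk: "\<And>k. k \<ge> 1 \<Longrightarrow> s k = conj_part m d k" unfolding s_def conj_seq_def by simp
  have GC: "\<And>j k. k \<ge> 1 \<Longrightarrow> j \<le> r k \<longleftrightarrow> (j = 0 \<or> (j \<le> m+1 \<and> int k \<le> c j))"
    using rk card_ge_iff[OF assms(1)] by simp
  have GD: "\<And>j k. k \<ge> 1 \<Longrightarrow> j \<le> s k \<longleftrightarrow> (j = 0 \<or> (j \<le> m \<and> int k \<le> d j))"
    using sk card_ge_iff[OF assms(3)] by simp
  have cnn: "\<And>j. 1 \<le> j \<Longrightarrow> j \<le> m+1 \<Longrightarrow> c j \<ge> 0"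
    using assms(1,2) unfolding nonincr_on_def by force
  have cmono: "\<And>i j. 1 \<le> i \<Longrightarrow> i \<le> j \<Longrightarrow> j \<le> m+1 \<Longrightarrow> c j \<le> c i"
    using assms(1) unfolding nonincr_on_def by blast
  have dmono: "\<And>i j. 1 \<le> i \<Longrightarrow> i \<le> j \<Longrightarrow> j \<le> m \<Longrightarrow> d j \<le> d i"
    using assms(3) unfolding nonincr_on_def by blast
  have dnn: "\<And>j. 1 \<le> j \<Longrightarrow> j \<le> m \<Longrightarrow> d j \<ge> 0" using assms(4) by auto
  have r0: "r 0 = s 0 + 1" unfolding r_def s_def conj_seq_def by simp
  have bnd: "\<And>k. s k < r k \<Longrightarrow> k \<le> nat (c 1)"
  proof -
    fix k assume "s k < r k"
    show "k \<le> nat (c 1)"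
    proof (cases "k = 0")
      case False
      then have "1 \<le> r k" using \<open>s k < r k\<close> by simp
      then have "int k \<le> c 1" using GC[of k 1] False by simp
      then show ?thesis by simp
    qed simp
  qed
  define P where "P g \<longleftrightarrow> (\<forall>k. 1 \<le> k \<and> k \<le> g \<longrightarrow> r k = s k + 1) \<and> (\<forall>k>g. r k \<le> s k)" for g
  define Q where "Q g \<longleftrightarrow> int g \<le> c 1 \<and> (\<forall>j. 1 \<le> j \<and> j \<le> m+1 \<and> int g < c j \<longrightarrow> j \<le> m \<and> c j \<le> d j)
     \<and> (\<forall>j. 1 \<le> j \<and> j \<le> m \<longrightarrow> min (c (j+1)) (int g) = min (d j) (int g))" for g
  have cm: "conj_maj s r \<longleftrightarrow> (\<exists>g. P g)"
    unfolding P_def by (rule cm_iff[of r s "nat (c 1)", OF r0 bnd])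
  have PQ: "Q g" if "P g" for g
  proof -
    have P1: "\<And>k. 1 \<le> k \<Longrightarrow> k \<le> g \<Longrightarrow> r k = s k + 1" and P2: "\<And>k. g < k \<Longrightarrow> r k \<le> s k"
      using that unfolding P_def by auto
    have a: "int g \<le> c 1"
    proof (cases "g = 0")
      case True then show ?thesis using cnn[of 1] by simp
    next
      case False
      then have "1 \<le> r g" using P1[of g] by simp
      then show ?thesis using GC[of g 1] False by simp
    qed
    have b: "j \<le> m \<and> c j \<le> d j" if j: "1 \<le> j" "j \<le> m+1" "int g < c j" for j
    proof -
      define k where "k = nat (c j)"
      have k1: "k \<ge> 1" "g < k" "int k = c j" using j unfolding k_def by auto
      have "j \<le> r k" using GC[of k j] k1 j by simp
      then have "j \<le> s k" using P2[of k] k1 by simp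
      then show ?thesis using GD[of k j] k1 j by simp
    qed
    have cc: "min (c (j+1)) (int g) = min (d j) (int g)" if j: "1 \<le> j" "j \<le> m" for j
    proof -
      have c1: "\<not> c (j+1) < min (d j) (int g)"
      proof
        assume h: "c (j+1) < min (d j) (int g)"
        define k where "k = nat (c (j+1)) + 1"
        have k1: "k \<ge> 1" "k \<le> g" "int k = c (j+1) + 1" using h cnn[of "j+1"] j unfolding k_def by auto
        have "j \<le> s k" using GD[of k j] k1 j h by simp
        then have "j + 1 \<le> r k" using P1[of k] k1 by simp
        then show False using GC[of k "j+1"] k1 by simp
      qed
      have c2: "\<not> d j < min (c (j+1)) (int g)"
      proof
        assume h: "d j < min (c (j+1)) (int g)"
        define k where "k = nat (d j) + 1"
        have k1: "k \<ge> 1" "k \<le> g" "int k = d j + 1" using h dnn[of j] j unfolding k_def by auto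
        have "j + 1 \<le> r k" using GC[of k "j+1"] k1 j h by simp
        then have "j \<le> s k" using P1[of k] k1 by simp
        then show False using GD[of k j] k1 j by simp
      qed
      show ?thesis using c1 c2 by linarith
    qed
    show ?thesis unfolding Q_def using a b cc by blast
  qed
  have QP: "P g" if "Q g" for g
  proof -
    have a: "int g \<le> c 1" and b: "\<And>j. 1 \<le> j \<Longrightarrow> j \<le> m+1 \<Longrightarrow> int g < c j \<Longrightarrow> j \<le> m \<and> c j \<le> d j"
      and cc: "\<And>j. 1 \<le> j \<Longrightarrow> j \<le> m \<Longrightarrow> min (c (j+1)) (int g) = min (d j) (int g)"
      using that unfolding Q_def by auto
    have P1: "r k = s k + 1" if k: "1 \<le> k" "k \<le> g" for k
    proof (rule antisym)
      define j where "j = s k"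
      have "j \<le> s k" by (simp add: j_def)
      then have "j = 0 \<or> (j \<le> m \<and> int k \<le> d j)" using GD k by simp
      then have "j + 1 \<le> r k"
      proof (cases "j = 0")
        case True then show ?thesis using GC[of k 1] k a by simp
      next
        case False
        then have h: "j \<le> m \<and> int k \<le> d j" using \<open>j = 0 \<or> (j \<le> m \<and> int k \<le> d j)\<close> by simp
        have j1: "j \<ge> 1" using False by simp
        have "int k \<le> c (j+1)" using cc[of j] h j1 k by linarith
        then show ?thesis using GC[of k "j+1"] k h by simp
      qed
      then show "s k + 1 \<le> r k" by (simp add: j_def)
    next
      define j where "j = r k"
      have "j \<le> r k" by (simp add: j_def)
      then have h: "j = 0 \<or> (j \<le> m+1 \<and> int k \<le> c j)" using GC k by simp
      have "j - 1 \<le> s k"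
      proof (cases "j \<le> 1")
        case False
        then have e: "min (c j) (int g) = min (d (j - 1)) (int g)" and hh: "int k \<le> c j"
          using cc[of "j-1"] h k by auto
        then have "int k \<le> d (j - 1)" using k by linarith
        then show ?thesis using GD[of k "j-1"] k h False by auto
      qed simp
      then show "r k \<le> s k + 1" by (simp add: j_def)
    qed
    have P2: "r k \<le> s k" if k: "g < k" for k
    proof -
      define j where "j = r k"
      have k1: "k \<ge> 1" using k by simp
      have "j \<le> r k" by (simp add: j_def)
      then have h: "j = 0 \<or> (j \<le> m+1 \<and> int k \<le> c j)" using GC k1 by simp
      have "j \<le> s k"
      proof (cases "j = 0")
        case False
        then have "j \<le> m \<and> c j \<le> d j" using b[of j] h k by auto
        then show ?thesis using GD[of k j] k1 h False by simp
      qed simp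
      then show ?thesis by (simp add: j_def)
    qed
    show ?thesis unfolding P_def using P1 P2 by blast
  qed
  have QH: "(\<exists>g. Q g) \<longleftrightarrow> (\<exists>h. 1 \<le> h \<and> h \<le> m+1 \<and> (\<forall>i. 1 \<le> i \<and> i < h \<longrightarrow> c i \<le> d i)
      \<and> (\<forall>i. h \<le> i \<and> i \<le> m \<longrightarrow> d i = c (i+1)))"
  proof
    assume "\<exists>g. Q g"
    then obtain g where "Q g" by blast
    then have a: "int g \<le> c 1" and b: "\<And>j. 1 \<le> j \<Longrightarrow> j \<le> m+1 \<Longrightarrow> int g < c j \<Longrightarrow> j \<le> m \<and> c j \<le> d j"
      and cc: "\<And>j. 1 \<le> j \<Longrightarrow> j \<le> m \<Longrightarrow> min (c (j+1)) (int g) = min (d j) (int g)"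
      unfolding Q_def by auto
    define h where "h = (LEAST j. 1 \<le> j \<and> (j = m+1 \<or> (c j \<le> int g \<and> d j \<le> int g)))"
    have H: "1 \<le> h \<and> (h = m+1 \<or> (c h \<le> int g \<and> d h \<le> int g))"
      unfolding h_def by (rule LeastI[of _ "m+1"]) auto
    have hle: "h \<le> m+1" unfolding h_def by (rule Least_le) auto
    have N: "c i \<le> d i" if i: "1 \<le> i" "i < h" for i
    proof -
      have "\<not> (1 \<le> i \<and> (i = m+1 \<or> (c i \<le> int g \<and> d i \<le> int g)))"
        using \<open>i < h\<close> unfolding h_def by (rule not_less_Least)
      then have "i \<le> m" "\<not> (c i \<le> int g \<and> d i \<le> int g)" using i hle by auto
      then show ?thesis using b[of i] i by force
    qed
    have E: "d i = c (i+1)" if i: "h \<le> i" "i \<le> m" for i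
    proof -
      have "c h \<le> int g" "d h \<le> int g" using H i by auto
      moreover have "c (i+1) \<le> c h" using cmono[of h "i+1"] H i by simp
      moreover have "d i \<le> d h" using dmono[of h i] H i by simp
      ultimately show ?thesis using cc[of i] H i by simp
    qed
    show "\<exists>h. 1 \<le> h \<and> h \<le> m+1 \<and> (\<forall>i. 1 \<le> i \<and> i < h \<longrightarrow> c i \<le> d i)
      \<and> (\<forall>i. h \<le> i \<and> i \<le> m \<longrightarrow> d i = c (i+1))"
      using H hle N E by blast
  next
    assume "\<exists>h. 1 \<le> h \<and> h \<le> m+1 \<and> (\<forall>i. 1 \<le> i \<and> i < h \<longrightarrow> c i \<le> d i)
      \<and> (\<forall>i. h \<le> i \<and> i \<le> m \<longrightarrow> d i = c (i+1))"
    then obtain h where h: "1 \<le> h" "h \<le> m+1" "\<And>i. 1 \<le> i \<Longrightarrow> i < h \<Longrightarrow> c i \<le> d i"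
      "\<And>i. h \<le> i \<Longrightarrow> i \<le> m \<Longrightarrow> d i = c (i+1)" by blast
    define g where "g = nat (c h)"
    have gh: "int g = c h" using cnn h unfolding g_def by simp
    have q1: "int g \<le> c 1" using gh cmono[of 1 h] h by simp
    have q2: "j \<le> m \<and> c j \<le> d j" if j: "1 \<le> j \<and> j \<le> m + 1 \<and> int g < c j" for j
    proof -
      have "j < h" using j cmono[of h j] h gh by (metis linorder_not_le not_less)
      then show "j \<le> m \<and> c j \<le> d j" using h j by auto
    qed
    have q3: "min (c (j+1)) (int g) = min (d j) (int g)" if j: "1 \<le> j \<and> j \<le> m" for j
      proof (cases "h \<le> j")
        case True then show ?thesis using h j by simp
      next
        case False
        have "c h \<le> c (j+1)" using cmono[of "j+1" h] False h j by simp
        moreover have "c h \<le> d j" proof - have "c j \<le> d j" using h(3)[of j] False j by simp moreover have "c h \<le> c j" using cmono[of j h] False j h by simp ultimately show ?thesis by linarith qed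
        ultimately show ?thesis using gh by simp
      qed
    have "Q g" unfolding Q_def using q1 q2 q3 by blast
    then show "\<exists>g. Q g" by blast
  qed
  show ?thesis
    unfolding osm_iff QH[symmetric] r_def[symmetric] s_def[symmetric] cm using PQ QP by blast
qed

end
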